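(* Let $r\ge 2$ and let $\psi\in C^\infty(\mathbb{R})$ with $\psi''>0$ everywhere. Let $\mathcal{M}_{3,r,\psi}=(\mathbb{R}^{2r+2},g_{3,r,\psi})$, where on $\mathbb{R}^{2r+2}$ with coordinates $(u_1,\dots,u_r,v_1,\dots,v_r,x,y)$ the metric $g_{3,r,\psi}$ has as its only non-zero components (up to symmetry) $g(\partial_x,\partial_y)=1$, $g(\partial_{u_i},\partial_{v_j})=\delta_{ij}$, and $g(\partial_x,\partial_x)=-2u_1v_2-\dots-2u_{r-1}v_r-2\psi(u_r)$. Then $\mathcal{M}_{3,r,\psi}$ is Osserman nilpotent of order $2r$: for every tangent vector $\xi$ the Jacobi operator satisfies $J(\xi)^{2r}=0$, and there exist a point $P_0$ and $\xi_0\in T_{P_0}\mathbb{R}^{2r+2}$ with $J(\xi_0)^{2r-1}\neq 0$.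
   Context: The curvature tensor is $R(a,b,c,d)=g\big((\nabla_a\nabla_b-\nabla_b\nabla_a-\nabla_{[a,b]})c,d\big)$. For a tangent vector $\xi$ at $P$, the Jacobi operator $J(\xi)$ is the linear endomorphism of $T_PM$ characterized by $g(J(\xi)y,z)=R(y,\xi,\xi,z)$ for all $y,z\in T_PM$. *)

theory Defs
  imports "HOL-Analysis.Analysis" "Jordan_Normal_Form.Matrix"
begin

text \<open>Points of R^n are coordinate functions nat => real (only indices < n matter).
  A (pseudo-Riemannian) metric on R^n is given by its components g i j P = g(d_i,d_j) at P.\<close>

type_synonym point = "nat \<Rightarrow> real"
type_synonym metric = "nat \<Rightarrow> nat \<Rightarrow> point \<Rightarrow> real"

definition pd :: "nat \<Rightarrow> (point \<Rightarrow> real) \<Rightarrow> point \<Rightarrow> real" where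
  "pd k f P = deriv (\<lambda>t. f (P(k := t))) (P k)"

definition metric_mat :: "nat \<Rightarrow> metric \<Rightarrow> point \<Rightarrow> real mat" where
  "metric_mat n g P = mat n n (\<lambda>(i,j). g i j P)"

definition inv_metric :: "nat \<Rightarrow> metric \<Rightarrow> metric" where
  "inv_metric n g = (\<lambda>i j P. (THE B. B \<in> carrier_mat n n \<and> metric_mat n g P * B = 1\<^sub>m n) $$ (i,j))"

text \<open>Christoffel symbols Gamma^l_{ij} of the Levi-Civita connection: nabla_{d_i} d_j = sum_l Gamma^l_{ij} d_l.\<close>
definition christoffel :: "nat \<Rightarrow> metric \<Rightarrow> nat \<Rightarrow> nat \<Rightarrow> nat \<Rightarrow> point \<Rightarrow> real" where
  "christoffel n g l i j P = (1/2) * (\<Sum>m<n. inv_metric n g l m P *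
      (pd i (g j m) P + pd j (g i m) P - pd m (g i j) P))"

text \<open>R(d_i,d_j)d_k = (nabla_i nabla_j - nabla_j nabla_i) d_k = sum_m riem_up m i j k * d_m.\<close>
definition riem_up :: "nat \<Rightarrow> metric \<Rightarrow> nat \<Rightarrow> nat \<Rightarrow> nat \<Rightarrow> nat \<Rightarrow> point \<Rightarrow> real" where
  "riem_up n g m i j k P =
     pd i (christoffel n g m j k) P - pd j (christoffel n g m i k) P
     + (\<Sum>l<n. christoffel n g l j k P * christoffel n g m i l P
              - christoffel n g l i k P * christoffel n g m j l P)"

text \<open>R(a,b,c,d) = g((nabla_a nabla_b - nabla_b nabla_a - nabla_{[a,b]}) c, d), extended multilinearly.\<close>
definition curv :: "nat \<Rightarrow> metric \<Rightarrow> point \<Rightarrow> real vec \<Rightarrow> real vec \<Rightarrow> real vec \<Rightarrow> real vec \<Rightarrow> real" where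
  "curv n g P a b c d = (\<Sum>i<n. \<Sum>j<n. \<Sum>k<n. \<Sum>h<n. \<Sum>m<n.
      a$i * b$j * c$k * d$h * riem_up n g m i j k P * g m h P)"

definition gform :: "nat \<Rightarrow> metric \<Rightarrow> point \<Rightarrow> real vec \<Rightarrow> real vec \<Rightarrow> real" where
  "gform n g P y z = (\<Sum>i<n. \<Sum>j<n. y$i * z$j * g i j P)"

definition jacobi :: "nat \<Rightarrow> metric \<Rightarrow> point \<Rightarrow> real vec \<Rightarrow> real mat" where
  "jacobi n g P \<xi> = (THE A. A \<in> carrier_mat n n \<and>
      (\<forall>y \<in> carrier_vec n. \<forall>z \<in> carrier_vec n. gform n g P (A *\<^sub>v y) z = curv n g P y \<xi> \<xi> z))"

text \<open>The metric g_{3,r,psi} on R^{2r+2}, coordinates (u_1..u_r, v_1..v_r, x, y) at indices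
  u_i = i-1, v_j = r+j-1, x = 2r, y = 2r+1.\<close>
definition g3 :: "nat \<Rightarrow> (real \<Rightarrow> real) \<Rightarrow> metric" where
  "g3 r \<psi> i j P =
     (if (i = 2*r \<and> j = 2*r+1) \<or> (i = 2*r+1 \<and> j = 2*r) then 1
      else if (i < r \<and> j = r + i) \<or> (j < r \<and> i = r + j) then 1
      else if i = 2*r \<and> j = 2*r then
        - 2 * (\<Sum>k<r-1. P k * P (r + k + 1)) - 2 * \<psi> (P (r-1))
      else 0)"

end

theory Submission
  imports Defs
begin

no_notation vec_nth (infixl \<open>$\<close> 90)

definition pp :: "nat \<Rightarrow> nat \<Rightarrow> nat" where
 "pp r i = (if i < r then r+i else if i < 2*r then i - r else if i = 2*r then 2*r+1 else 2*r)"
definition Fn :: "nat \<Rightarrow> (real\<Rightarrow>real) \<Rightarrow> point \<Rightarrow> real" where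
 "Fn r \<psi> P = - 2 * (\<Sum>k<r-1. P k * P (r + k + 1)) - 2 * \<psi> (P (r-1))"
definition DF :: "nat \<Rightarrow> (real\<Rightarrow>real) \<Rightarrow> nat \<Rightarrow> point \<Rightarrow> real" where
 "DF r \<psi> a P = (if a < r-1 then -2 * P (r+a+1) else if a = r-1 then -2 * deriv \<psi> (P (r-1))
    else if r+1 \<le> a \<and> a < 2*r then -2 * P (a-r-1) else 0)"
definition HF :: "nat \<Rightarrow> (real\<Rightarrow>real) \<Rightarrow> nat \<Rightarrow> nat \<Rightarrow> point \<Rightarrow> real" where
 "HF r \<psi> i a P = (if a < r-1 \<and> i = r+a+1 then -2 else if a = r-1 \<and> i = r-1 then -2 * deriv (deriv \<psi>) (P (r-1))
    else if r+1 \<le> a \<and> a < 2*r \<and> i = a-r-1 then -2 else 0)"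

lemma pd_eq: "((\<lambda>t. f (P(k:=t))) has_real_derivative D) (at (P k)) \<Longrightarrow> pd k f P = D"
  unfolding pd_def by (rule DERIV_imp_deriv)

lemma upd_deriv: "((\<lambda>t. (P(k:=t)) j) has_real_derivative (if j = k then 1 else 0)) (at s)"
  by (cases "j = k") auto

lemma pd_const: "pd k (\<lambda>P. c) P = 0"
  unfolding pd_def by simp

lemma sum_shift_delta: "(\<Sum>a<(r::nat)-1. (if r+a+1 = k then (f a::real) else 0)) =
   (if r+1 \<le> k \<and> k < 2*r then f (k-r-1) else 0)"
proof -
  have "(\<Sum>a<r-1. (if r+a+1 = k then f a else 0)) = (\<Sum>a<r-1. (if a = k-r-1 \<and> r+1 \<le> k then f a else 0))"
    by (rule sum.cong) auto
  also have "\<dots> = (\<Sum>a<r-1. (if a = k-r-1 then (if r+1 \<le> k then f a else 0) else 0))"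
    by (rule sum.cong) auto
  also have "\<dots> = (if r+1 \<le> k \<and> k < 2*r then f (k-r-1) else 0)"
    by (subst sum.delta) auto
  finally show ?thesis .
qed

lemma dF:
  assumes "\<forall>x. \<psi> differentiable at x"
  shows "((\<lambda>t. Fn r \<psi> (P(k:=t))) has_real_derivative DF r \<psi> k P) (at (P k))"
proof -
  have s: "((\<lambda>t. \<Sum>a<r-1. (P(k:=t)) a * (P(k:=t)) (r+a+1)) has_real_derivative
     (\<Sum>a<r-1. (P(k:=P k)) a * (if r+a+1 = k then 1 else 0) + (if a = k then 1 else 0) * (P(k:=P k)) (r+a+1))) (at (P k))"
    apply (rule DERIV_sum)
    apply (rule DERIV_mult'[where f="\<lambda>t. (P(k:=t)) _" and g="\<lambda>t. (P(k:=t)) _"])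
    apply (rule upd_deriv)+
    done
  have ps: "((\<lambda>t. \<psi> ((P(k:=t)) (r-1))) has_real_derivative (if k = r-1 then deriv \<psi> (P k) else 0)) (at (P k))"
  proof (cases "k = r-1")
    case True
    then show ?thesis using assms DERIV_deriv_iff_real_differentiable by auto
  next
    case False
    then show ?thesis by auto
  qed
  have e: "(\<Sum>a<r-1. (P(k:=P k)) a * (if r+a+1 = k then 1 else 0) + (if a = k then 1 else 0) * (P(k:=P k)) (r+a+1))
     = (if k < r-1 then P (r+k+1) else 0) + (if r+1 \<le> k \<and> k < 2*r then P (k-r-1) else 0)"
  proof -
    have "(\<Sum>a<r-1. (P(k:=P k)) a * (if r+a+1 = k then 1 else 0) + (if a = k then 1 else 0) * (P(k:=P k)) (r+a+1))
      = (\<Sum>a<r-1. (if r+a+1 = k then P a else 0)) + (\<Sum>a<r-1. (if a = k then P (r+a+1) else 0))"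
      unfolding sum.distrib[symmetric] by (rule sum.cong) auto
    also have "\<dots> = (if r+1 \<le> k \<and> k < 2*r then P (k-r-1) else 0) + (if k < r-1 then P (r+k+1) else 0)"
      by (simp only: sum_shift_delta sum.delta finite_lessThan lessThan_iff)
    finally show ?thesis by simp
  qed
  have "((\<lambda>t. Fn r \<psi> (P(k:=t))) has_real_derivative
     -2 * (\<Sum>a<r-1. (P(k:=P k)) a * (if r+a+1 = k then 1 else 0) + (if a = k then 1 else 0) * (P(k:=P k)) (r+a+1))
     - 2 * (if k = r-1 then deriv \<psi> (P k) else 0)) (at (P k))"
    unfolding Fn_def by (rule DERIV_diff[OF DERIV_cmult[OF s] DERIV_cmult[OF ps]])
  then show ?thesis
    by (rule DERIV_cong) (simp only: e, auto simp: DF_def)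
qed

lemma dDF:
  assumes "\<forall>x. deriv \<psi> differentiable at x"
  shows "((\<lambda>t. DF r \<psi> a (P(i:=t))) has_real_derivative HF r \<psi> i a P) (at (P i))"
proof -
  consider "a < r-1" | "a = r-1" | "r+1 \<le> a \<and> a < 2*r" | "\<not> a < r-1 \<and> a \<noteq> r-1 \<and> \<not> (r+1 \<le> a \<and> a < 2*r)" by blast
  then show ?thesis
  proof cases
    case 1
    have d: "((\<lambda>t. -2 * (P(i:=t)) (r+a+1)) has_real_derivative -2 * (if r+a+1 = i then 1 else 0)) (at (P i))"
      by (rule DERIV_cmult, rule upd_deriv)
    have f: "(\<lambda>t. DF r \<psi> a (P(i:=t))) = (\<lambda>t. -2 * (P(i:=t)) (r+a+1))" using 1 by (simp add: DF_def)
    have h: "HF r \<psi> i a P = -2 * (if r+a+1 = i then 1 else 0)" using 1 by (auto simp: HF_def)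
    show ?thesis unfolding f h by (rule d)
  next
    case 2
    show ?thesis
    proof (cases "i = r-1")
      case True
      have "((\<lambda>t. -2 * deriv \<psi> t) has_real_derivative -2 * deriv (deriv \<psi>) (P i)) (at (P i))"
        by (rule DERIV_cmult) (use assms DERIV_deriv_iff_real_differentiable[of "deriv \<psi>" "P i"] in simp)
      then show ?thesis using 2 True by (simp add: DF_def HF_def)
    next
      case False
      have "\<not> (r+1 \<le> r-1)" by arith
      then show ?thesis using 2 False by (simp add: DF_def HF_def)
    qed
  next
    case 3
    have d: "((\<lambda>t. -2 * (P(i:=t)) (a-r-1)) has_real_derivative -2 * (if a-r-1 = i then 1 else 0)) (at (P i))"
      by (rule DERIV_cmult, rule upd_deriv)
    have f: "(\<lambda>t. DF r \<psi> a (P(i:=t))) = (\<lambda>t. -2 * (P(i:=t)) (a-r-1))"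
    proof -
      have "\<not> a < r-1" "a \<noteq> r-1" using 3 by arith+
      then show ?thesis using 3 by (simp add: DF_def)
    qed
    have h: "HF r \<psi> i a P = -2 * (if a-r-1 = i then 1 else 0)" using 3 by (auto simp: HF_def)
    show ?thesis unfolding f h by (rule d)
  next
    case 4
    have f: "(\<lambda>t. DF r \<psi> a (P(i:=t))) = (\<lambda>t. 0)" using 4 by (auto simp: DF_def fun_eq_iff)
    have h: "HF r \<psi> i a P = 0" using 4 by (auto simp: HF_def)
    show ?thesis unfolding f h by simp
  qed
qed

lemma pd_DF:
  assumes "\<forall>x. deriv \<psi> differentiable at x"
  shows "pd i (DF r \<psi> a) P = HF r \<psi> i a P"
  by (rule pd_eq, rule dDF[OF assms])

lemma g3_fun: "g3 r \<psi> j m = (if j = 2*r \<and> m = 2*r then Fn r \<psi> else (\<lambda>P. g3 r \<psi> j m (\<lambda>_. 0)))"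
  by (auto simp: g3_def Fn_def fun_eq_iff)

lemma pd_Fn:
  assumes "\<forall>x. \<psi> differentiable at x"
  shows "pd k (Fn r \<psi>) P = DF r \<psi> k P"
  by (rule pd_eq, rule dF[OF assms])

lemma pd_g3:
  assumes "\<forall>x. \<psi> differentiable at x"
  shows "pd k (g3 r \<psi> j m) P = (if j = 2*r \<and> m = 2*r then DF r \<psi> k P else 0)"
proof (cases "j = 2*r \<and> m = 2*r")
  case True
  then show ?thesis using g3_fun[of r \<psi> j m] pd_Fn[OF assms] by simp
next
  case False
  then have "g3 r \<psi> j m = (\<lambda>P. g3 r \<psi> j m (\<lambda>_. 0))" using False by (auto simp: g3_def fun_eq_iff)
  then have "pd k (g3 r \<psi> j m) P = pd k (\<lambda>P. g3 r \<psi> j m (\<lambda>_. 0)) P"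
    by (rule arg_cong[where f="\<lambda>f. pd k f P"])
  then show ?thesis using False by (simp only: pd_const) simp
qed

lemma pp_lt: "i < 2*r+2 \<Longrightarrow> pp r i < 2*r+2" by (auto simp: pp_def)
lemma pp_pp: "i < 2*r+2 \<Longrightarrow> pp r (pp r i) = i" by (auto simp: pp_def)
lemma pp_Y: "i < 2*r+2 \<Longrightarrow> pp r i = 2*r+1 \<longleftrightarrow> i = 2*r" by (auto simp: pp_def)
lemma pp_X: "i < 2*r+2 \<Longrightarrow> pp r i = 2*r \<longleftrightarrow> i = 2*r+1" by (auto simp: pp_def)
lemma pp_eq_iff: "i < 2*r+2 \<Longrightarrow> j < 2*r+2 \<Longrightarrow> j = pp r i \<longleftrightarrow> i = pp r j" by (auto simp: pp_def)

lemma sum_delta_lt: "a < (n::nat) \<Longrightarrow> (\<Sum>m<n. if m = a then f m else 0) = (f a :: real)"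
  using sum.delta[of "{..<n}" a f] by simp

lemma g3_alt: "i < 2*r+2 \<Longrightarrow> j < 2*r+2 \<Longrightarrow>
  g3 r \<psi> i j P = (if j = pp r i then 1 else 0) + (if i = 2*r \<and> j = 2*r then Fn r \<psi> P else 0)"
  by (auto simp: g3_def pp_def Fn_def)

definition Gi :: "nat \<Rightarrow> (real \<Rightarrow> real) \<Rightarrow> nat \<Rightarrow> nat \<Rightarrow> point \<Rightarrow> real" where
  "Gi r \<psi> l m P = (if m = pp r l then 1 else 0) + (if l = 2*r+1 \<and> m = 2*r+1 then - Fn r \<psi> P else 0)"

lemma g3_sym: "g3 r \<psi> i j P = g3 r \<psi> j i P" by (auto simp: g3_def)
lemma Gi_sym: "i < 2*r+2 \<Longrightarrow> j < 2*r+2 \<Longrightarrow> Gi r \<psi> i j P = Gi r \<psi> j i P"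
  by (auto simp: Gi_def pp_def)

lemma prod_entry:
  assumes i: "i < 2*r+2" and j: "j < 2*r+2"
  shows "(\<Sum>m<2*r+2. g3 r \<psi> i m P * Gi r \<psi> m j P) = (if i = j then 1 else 0)"
proof -
  let ?F = "Fn r \<psi> P"
  have "(\<Sum>m<2*r+2. g3 r \<psi> i m P * Gi r \<psi> m j P) =
     (\<Sum>m<2*r+2. (if m = pp r i then Gi r \<psi> m j P else 0) + (if m = 2*r then (if i = 2*r then ?F * Gi r \<psi> m j P else 0) else 0))"
  proof (rule sum.cong)
    fix m assume "m \<in> {..<2*r+2}"
    then have m: "m < 2*r+2" by simp
    show "g3 r \<psi> i m P * Gi r \<psi> m j P = (if m = pp r i then Gi r \<psi> m j P else 0) + (if m = 2*r then (if i = 2*r then ?F * Gi r \<psi> m j P else 0) else 0)"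
      unfolding g3_alt[OF i m] using pp_X[OF i] pp_Y[OF i] by (cases "m = pp r i"; cases "m = 2*r"; simp)
  qed simp
  also have "\<dots> = Gi r \<psi> (pp r i) j P + (if i = 2*r then ?F * Gi r \<psi> (2*r) j P else 0)"
    using pp_lt[OF i] by (simp add: sum.distrib sum_delta_lt)
  also have "\<dots> = (if i = j then 1 else 0)"
    using i j by (auto simp: Gi_def pp_def)
  finally show ?thesis .
qed

lemma metric_inv:
  assumes "r \<ge> 2"
  shows "metric_mat (2*r+2) (g3 r \<psi>) P * mat (2*r+2) (2*r+2) (\<lambda>(i,j). Gi r \<psi> i j P) = 1\<^sub>m (2*r+2)"
proof (rule eq_matI)
  fix i j assume "i < dim_row (1\<^sub>m (2*r+2))" "j < dim_col (1\<^sub>m (2*r+2))"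
  then have i: "i < 2*r+2" and j: "j < 2*r+2" by auto
  have "(metric_mat (2*r+2) (g3 r \<psi>) P * mat (2*r+2) (2*r+2) (\<lambda>(i,j). Gi r \<psi> i j P)) $$ (i,j)
     = (\<Sum>m<2*r+2. g3 r \<psi> i m P * Gi r \<psi> m j P)"
    using i j by (simp add: metric_mat_def scalar_prod_def lessThan_atLeast0)
  then show "(metric_mat (2*r+2) (g3 r \<psi>) P * mat (2*r+2) (2*r+2) (\<lambda>(i,j). Gi r \<psi> i j P)) $$ (i,j) = 1\<^sub>m (2*r+2) $$ (i,j)"
    using i j prod_entry[OF i j] by simp
qed (auto simp: metric_mat_def)

lemma metric_sym: "(metric_mat n (g3 r \<psi>) P)\<^sup>T = metric_mat n (g3 r \<psi>) P"
  by (rule eq_matI) (auto simp: metric_mat_def g3_sym)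

lemma GiM_sym: "(mat (2*r+2) (2*r+2) (\<lambda>(i,j). Gi r \<psi> i j P))\<^sup>T = mat (2*r+2) (2*r+2) (\<lambda>(i,j). Gi r \<psi> i j P)"
  by (rule eq_matI) (auto simp: Gi_sym)

lemma inv_metric_eq:
  assumes "r \<ge> 2" "l < 2*r+2" "m < 2*r+2"
  shows "inv_metric (2*r+2) (g3 r \<psi>) l m P = Gi r \<psi> l m P"
proof -
  let ?M = "metric_mat (2*r+2) (g3 r \<psi>) P"
  let ?G = "mat (2*r+2) (2*r+2) (\<lambda>(i,j). Gi r \<psi> i j P)"
  have M: "?M \<in> carrier_mat (2*r+2) (2*r+2)" by (simp add: metric_mat_def)
  have G: "?G \<in> carrier_mat (2*r+2) (2*r+2)" by simp
  have MG: "?M * ?G = 1\<^sub>m (2*r+2)" by (rule metric_inv[OF assms(1)])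
  have GM: "?G * ?M = 1\<^sub>m (2*r+2)"
  proof -
    have "?G * ?M = ?G\<^sup>T * ?M\<^sup>T" by (simp only: GiM_sym metric_sym)
    also have "\<dots> = (?M * ?G)\<^sup>T" by (rule transpose_mult[OF M G, symmetric])
    also have "\<dots> = 1\<^sub>m (2*r+2)" by (simp only: MG transpose_one)
    finally show ?thesis .
  qed
  have the_eq: "(THE B. B \<in> carrier_mat (2*r+2) (2*r+2) \<and> ?M * B = 1\<^sub>m (2*r+2)) = ?G"
  proof (rule the_equality)
    show "?G \<in> carrier_mat (2*r+2) (2*r+2) \<and> ?M * ?G = 1\<^sub>m (2*r+2)" using G MG by simp
  next
    fix B assume B: "B \<in> carrier_mat (2*r+2) (2*r+2) \<and> ?M * B = 1\<^sub>m (2*r+2)"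
    then have Bc: "B \<in> carrier_mat (2*r+2) (2*r+2)" and MB: "?M * B = 1\<^sub>m (2*r+2)" by auto
    have "?G = ?G * (?M * B)" using G by (simp only: MB right_mult_one_mat)
    also have "\<dots> = (?G * ?M) * B" by (rule assoc_mult_mat[symmetric, OF G M Bc])
    also have "\<dots> = B" by (simp only: GM left_mult_one_mat[OF Bc])
    finally show "B = ?G" by simp
  qed
  have "inv_metric (2*r+2) (g3 r \<psi>) l m P = (THE B. B \<in> carrier_mat (2*r+2) (2*r+2) \<and> ?M * B = 1\<^sub>m (2*r+2)) $$ (l,m)"
    by (simp only: inv_metric_def)
  also have "\<dots> = ?G $$ (l,m)" by (simp only: the_eq)
  finally show ?thesis using assms by simp
qed

definition Gm :: "nat \<Rightarrow> (real \<Rightarrow> real) \<Rightarrow> nat \<Rightarrow> nat \<Rightarrow> nat \<Rightarrow> point \<Rightarrow> real" where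
  "Gm r \<psi> l i j P = 1/2 * ((if j = 2*r \<and> l = 2*r+1 then DF r \<psi> i P else 0)
      + (if i = 2*r \<and> l = 2*r+1 then DF r \<psi> j P else 0)
      - (if i = 2*r \<and> j = 2*r then DF r \<psi> (pp r l) P else 0))"

lemma DF_ge: "r \<ge> 1 \<Longrightarrow> a \<ge> 2*r \<Longrightarrow> DF r \<psi> a P = 0" by (auto simp: DF_def)

lemma christoffel_eq:
  assumes r: "r \<ge> 2" and dpsi: "\<forall>x. \<psi> differentiable at x" and l: "l < 2*r+2"
  shows "christoffel (2*r+2) (g3 r \<psi>) l i j P = Gm r \<psi> l i j P"
proof -
  let ?F = "Fn r \<psi> P"
  define E where "E m = (if j = 2*r \<and> m = 2*r then DF r \<psi> i P else 0) + (if i = 2*r \<and> m = 2*r then DF r \<psi> j P else 0)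
      - (if i = 2*r \<and> j = 2*r then DF r \<psi> m P else 0)" for m
  have "christoffel (2*r+2) (g3 r \<psi>) l i j P = 1/2 * (\<Sum>m<2*r+2. Gi r \<psi> l m P * E m)"
    unfolding christoffel_def E_def
    by (intro arg_cong[where f="\<lambda>x. 1/2 * x"] sum.cong) (auto simp: inv_metric_eq[OF r l, simplified] pd_g3[OF dpsi])
  also have "(\<Sum>m<2*r+2. Gi r \<psi> l m P * E m) =
      (\<Sum>m<2*r+2. (if m = pp r l then E m else 0) + (if m = 2*r+1 then (if l = 2*r+1 then - ?F * E m else 0) else 0))"
  proof (rule sum.cong)
    fix m assume "m \<in> {..<2*r+2}"
    show "Gi r \<psi> l m P * E m = (if m = pp r l then E m else 0) + (if m = 2*r+1 then (if l = 2*r+1 then - ?F * E m else 0) else 0)"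
      unfolding Gi_def using pp_X[OF l] pp_Y[OF l] by (cases "m = pp r l"; cases "m = 2*r+1"; simp)
  qed simp
  also have "\<dots> = E (pp r l) + (if l = 2*r+1 then - ?F * E (2*r+1) else 0)"
  proof -
    have a: "2*r+1 < 2*r+2" by simp
    show ?thesis by (simp only: sum.distrib sum_delta_lt[OF pp_lt[OF l]] sum_delta_lt[OF a])
  qed
  also have "E (2*r+1) = 0" unfolding E_def using r by (simp add: DF_ge)
  finally have c: "christoffel (2*r+2) (g3 r \<psi>) l i j P = 1/2 * E (pp r l)" by simp
  have "Gm r \<psi> l i j P = 1/2 * E (pp r l)"
  proof (cases "l = 2*r+1")
    case True
    have "pp r l = 2*r" using True by (simp add: pp_def)
    then show ?thesis using True unfolding Gm_def E_def by simp
  next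
    case False
    then have "pp r l \<noteq> 2*r" using pp_X[OF l] by simp
    then show ?thesis using False unfolding Gm_def E_def by simp
  qed
  then show ?thesis using c by simp
qed

lemma sum_if_const: "(\<Sum>x\<in>A. if c then f x else 0) = (if c then (\<Sum>x\<in>A. f x) else (0::real))"
  by simp

lemma S1: fixes y a b z :: "nat \<Rightarrow> real" and H :: "nat \<Rightarrow> nat \<Rightarrow> real"
  assumes "X < n"
  shows "(\<Sum>i<n. \<Sum>j<n. \<Sum>k<n. \<Sum>h<n. y i * a j * b k * z h * (if h = X then if k = X then H i j else 0 else 0))
    = b X * z X * (\<Sum>i<n. \<Sum>j<n. y i * a j * H i j)"
  using assms by (simp add: if_distrib[where f="\<lambda>x. _ * x"] sum.delta sum_distrib_left sum_if_const ac_simps cong: if_cong)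

lemma S3: fixes y a b z :: "nat \<Rightarrow> real" and H :: "nat \<Rightarrow> nat \<Rightarrow> real"
  assumes "X < n"
  shows "(\<Sum>i<n. \<Sum>j<n. \<Sum>k<n. \<Sum>h<n. y i * a j * b k * z h * (if k = X then if j = X then H i h else 0 else 0))
    = a X * b X * (\<Sum>i<n. \<Sum>h<n. y i * z h * H i h)"
  using assms by (simp add: if_distrib[where f="\<lambda>x. _ * x"] sum.delta sum_distrib_left sum_if_const ac_simps cong: if_cong)

lemma Gm_ob: "Gm r \<psi> l i j P = 1/2 * (of_bool (j = 2*r \<and> l = 2*r+1) * DF r \<psi> i P
      + of_bool (i = 2*r \<and> l = 2*r+1) * DF r \<psi> j P
      - of_bool (i = 2*r \<and> j = 2*r) * DF r \<psi> (pp r l) P)"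
  by (simp add: Gm_def)

lemma pd_Gm:
  assumes "\<forall>x. deriv \<psi> differentiable at x"
  shows "pd q (Gm r \<psi> l i j) P = 1/2 * (of_bool (j = 2*r \<and> l = 2*r+1) * HF r \<psi> q i P
      + of_bool (i = 2*r \<and> l = 2*r+1) * HF r \<psi> q j P
      - of_bool (i = 2*r \<and> j = 2*r) * HF r \<psi> q (pp r l) P)"
  apply (rule pd_eq)
  unfolding Gm_ob
  by (rule DERIV_cmult[OF DERIV_diff[OF DERIV_add[OF DERIV_cmult[OF dDF[OF assms]] DERIV_cmult[OF dDF[OF assms]]] DERIV_cmult[OF dDF[OF assms]]]])

lemma DF_X: "r \<ge> 1 \<Longrightarrow> DF r \<psi> (2*r) P = 0" by (simp add: DF_ge)
lemma DF_Y: "r \<ge> 1 \<Longrightarrow> DF r \<psi> (Suc (2*r)) P = 0" by (simp add: DF_ge)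

lemma quad_zero:
  assumes r: "r \<ge> 2" and ij: "i \<noteq> j" and l: "l < 2*r+2"
  shows "Gm r \<psi> l j k P * Gm r \<psi> m i l P = 0"
proof (cases "l = 2*r+1")
  case True
  then show ?thesis using r by (simp add: Gm_def DF_Y)
next
  case False
  show ?thesis
  proof (cases "j = 2*r \<and> k = 2*r")
    case True
    then show ?thesis using False ij r l by (auto simp: Gm_def pp_def DF_X DF_Y)
  next
    case False2: False
    then show ?thesis using False by (auto simp: Gm_def)
  qed
qed

definition Ru :: "nat \<Rightarrow> (real \<Rightarrow> real) \<Rightarrow> nat \<Rightarrow> nat \<Rightarrow> nat \<Rightarrow> nat \<Rightarrow> point \<Rightarrow> real" where
  "Ru r \<psi> m i j k P =
     1/2 * (of_bool (k = 2*r \<and> m = 2*r+1) * HF r \<psi> i j P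
      + of_bool (j = 2*r \<and> m = 2*r+1) * HF r \<psi> i k P
      - of_bool (j = 2*r \<and> k = 2*r) * HF r \<psi> i (pp r m) P)
   - 1/2 * (of_bool (k = 2*r \<and> m = 2*r+1) * HF r \<psi> j i P
      + of_bool (i = 2*r \<and> m = 2*r+1) * HF r \<psi> j k P
      - of_bool (i = 2*r \<and> k = 2*r) * HF r \<psi> j (pp r m) P)"

lemma riem_eq:
  assumes r: "r \<ge> 2" and d0: "\<forall>x. \<psi> differentiable at x" and d1: "\<forall>x. deriv \<psi> differentiable at x"
    and m: "m < 2*r+2"
  shows "riem_up (2*r+2) (g3 r \<psi>) m i j k P = Ru r \<psi> m i j k P"
proof -
  have chr: "christoffel (2*r+2) (g3 r \<psi>) l a b = Gm r \<psi> l a b" if "l < 2*r+2" for l a b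
    using christoffel_eq[OF r d0 that] by (simp add: fun_eq_iff)
  have q: "(\<Sum>l<2*r+2. christoffel (2*r+2) (g3 r \<psi>) l j k P * christoffel (2*r+2) (g3 r \<psi>) m i l P
              - christoffel (2*r+2) (g3 r \<psi>) l i k P * christoffel (2*r+2) (g3 r \<psi>) m j l P) = 0"
  proof (cases "i = j")
    case True
    then show ?thesis by simp
  next
    case False
    show ?thesis
    proof (rule sum.neutral, rule ballI)
      fix l assume "l \<in> {..<2*r+2}"
      then have l: "l < 2*r+2" by simp
      show "christoffel (2*r+2) (g3 r \<psi>) l j k P * christoffel (2*r+2) (g3 r \<psi>) m i l P
              - christoffel (2*r+2) (g3 r \<psi>) l i k P * christoffel (2*r+2) (g3 r \<psi>) m j l P = 0"
        unfolding chr[OF l] chr[OF m]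
        using quad_zero[OF r False l, of \<psi> k P m] quad_zero[OF r False[symmetric] l, of \<psi> k P m]
        by auto
    qed
  qed
  show ?thesis
    unfolding riem_up_def q unfolding chr[OF m] pd_Gm[OF d1] Ru_def by simp
qed

lemma HF_ge: "r \<ge> 1 \<Longrightarrow> a \<ge> 2*r \<Longrightarrow> HF r \<psi> i a P = 0" by (auto simp: HF_def)
lemma HF_sym: "HF r \<psi> i a P = HF r \<psi> a i P"
proof -
  consider (c1) "a < r-1 \<and> i = r+a+1" | (c2) "a = r-1 \<and> i = r-1" | (c3) "r+1 \<le> a \<and> a < 2*r \<and> i = a-r-1"
    | (c4) "\<not> (a < r-1 \<and> i = r+a+1)" "\<not> (a = r-1 \<and> i = r-1)" "\<not> (r+1 \<le> a \<and> a < 2*r \<and> i = a-r-1)" by blast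
  then show ?thesis
  proof cases
    case c1
    then have n1: "\<not> (i < r-1 \<and> a = r+i+1)" and n2: "\<not> (i = r-1 \<and> a = r-1)" and y3: "r+1 \<le> i \<and> i < 2*r \<and> a = i-r-1" by linarith+
    show ?thesis unfolding HF_def by (simp only: if_P[OF c1] if_not_P[OF n1] if_not_P[OF n2] if_P[OF y3])
  next
    case c2
    then show ?thesis unfolding HF_def by simp
  next
    case c3
    then have y1: "i < r-1 \<and> a = r+i+1" and n1: "\<not> (a < r-1 \<and> i = r+a+1)" and n2: "\<not> (a = r-1 \<and> i = r-1)" by linarith+
    show ?thesis unfolding HF_def by (simp only: if_P[OF c3] if_not_P[OF n1] if_not_P[OF n2] if_P[OF y1])
  next
    case c4
    then have n1: "\<not> (i < r-1 \<and> a = r+i+1)" and n2: "\<not> (i = r-1 \<and> a = r-1)" and n3: "\<not> (r+1 \<le> i \<and> i < 2*r \<and> a = i-r-1)" by linarith+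
    show ?thesis unfolding HF_def by (simp only: if_not_P[OF c4(1)] if_not_P[OF c4(2)] if_not_P[OF c4(3)] if_not_P[OF n1] if_not_P[OF n2] if_not_P[OF n3])
  qed
qed

definition Rl :: "nat \<Rightarrow> (real \<Rightarrow> real) \<Rightarrow> nat \<Rightarrow> nat \<Rightarrow> nat \<Rightarrow> nat \<Rightarrow> point \<Rightarrow> real" where
  "Rl r \<psi> i j k h P =
     1/2 * ((if h = 2*r then if k = 2*r then HF r \<psi> i j P else 0 else 0)
      + (if h = 2*r then if j = 2*r then HF r \<psi> i k P else 0 else 0)
      - (if k = 2*r then if j = 2*r then HF r \<psi> i h P else 0 else 0))
   - 1/2 * ((if h = 2*r then if k = 2*r then HF r \<psi> j i P else 0 else 0)
      + (if h = 2*r then if i = 2*r then HF r \<psi> j k P else 0 else 0)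
      - (if k = 2*r then if i = 2*r then HF r \<psi> j h P else 0 else 0))"

lemma low:
  assumes r: "r \<ge> 2" and d0: "\<forall>x. \<psi> differentiable at x" and d1: "\<forall>x. deriv \<psi> differentiable at x"
    and h: "h < 2*r+2"
  shows "(\<Sum>m<2*r+2. riem_up (2*r+2) (g3 r \<psi>) m i j k P * g3 r \<psi> m h P) = Rl r \<psi> i j k h P"
proof -
  have "(\<Sum>m<2*r+2. riem_up (2*r+2) (g3 r \<psi>) m i j k P * g3 r \<psi> m h P)
    = (\<Sum>m<2*r+2. (if m = pp r h then Ru r \<psi> m i j k P else 0) + (if m = 2*r then (if h = 2*r then Ru r \<psi> m i j k P * Fn r \<psi> P else 0) else 0))"
  proof (rule sum.cong)
    fix m assume "m \<in> {..<2*r+2}"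
    then have m: "m < 2*r+2" by simp
    have e: "h = pp r m \<longleftrightarrow> m = pp r h" by (rule pp_eq_iff[OF m h])
    show "riem_up (2*r+2) (g3 r \<psi>) m i j k P * g3 r \<psi> m h P = (if m = pp r h then Ru r \<psi> m i j k P else 0) + (if m = 2*r then (if h = 2*r then Ru r \<psi> m i j k P * Fn r \<psi> P else 0) else 0)"
      unfolding riem_eq[OF r d0 d1 m] g3_alt[OF m h] e using pp_X[OF h] pp_Y[OF h]
      by (cases "m = pp r h"; cases "m = 2*r"; simp)
  qed simp
  also have "\<dots> = Ru r \<psi> (pp r h) i j k P + (if h = 2*r then Ru r \<psi> (2*r) i j k P * Fn r \<psi> P else 0)"
  proof -
    have a: "2*r < 2*r+2" by simp
    show ?thesis by (simp only: sum.distrib sum_delta_lt[OF pp_lt[OF h]] sum_delta_lt[OF a])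
  qed
  also have "Ru r \<psi> (2*r) i j k P = 0"
  proof -
    have "pp r (2*r) = 2*r+1" by (simp add: pp_def)
    then show ?thesis using r by (simp add: Ru_def HF_ge)
  qed
  also have "Ru r \<psi> (pp r h) i j k P = Rl r \<psi> i j k h P"
    unfolding Ru_def Rl_def pp_pp[OF h] pp_Y[OF h] by simp
  finally show ?thesis by simp
qed


definition Hq :: "nat \<Rightarrow> (real \<Rightarrow> real) \<Rightarrow> point \<Rightarrow> (nat \<Rightarrow> real) \<Rightarrow> (nat \<Rightarrow> real) \<Rightarrow> real" where
  "Hq r \<psi> P u v = (\<Sum>i<2*r+2. \<Sum>k<2*r+2. u i * v k * HF r \<psi> i k P)"

lemma Rl_simp: "Rl r \<psi> i j k h P =
     1/2 * ((if h = 2*r then if j = 2*r then HF r \<psi> i k P else 0 else 0)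
      - (if k = 2*r then if j = 2*r then HF r \<psi> i h P else 0 else 0))
   - 1/2 * ((if h = 2*r then if i = 2*r then HF r \<psi> j k P else 0 else 0)
      - (if k = 2*r then if i = 2*r then HF r \<psi> j h P else 0 else 0))"
  unfolding Rl_def using HF_sym[of r \<psi> j i P] by simp

lemma curv_Rl:
  fixes y a b z :: "real vec"
  assumes r: "r \<ge> 2" and d0: "\<forall>x. \<psi> differentiable at x" and d1: "\<forall>x. deriv \<psi> differentiable at x"
  shows "curv (2*r+2) (g3 r \<psi>) P y a b z =
    (\<Sum>i<2*r+2. \<Sum>j<2*r+2. \<Sum>k<2*r+2. \<Sum>h<2*r+2. y$i * a$j * b$k * z$h * Rl r \<psi> i j k h P)"
  unfolding curv_def
proof (intro sum.cong refl)
  fix i j k h assume "h \<in> {..<2*r+2}"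
  then have h: "h < 2*r+2" by simp
  have "(\<Sum>m<2*r+2. y$i * a$j * b$k * z$h * riem_up (2*r+2) (g3 r \<psi>) m i j k P * g3 r \<psi> m h P)
     = y$i * a$j * b$k * z$h * (\<Sum>m<2*r+2. riem_up (2*r+2) (g3 r \<psi>) m i j k P * g3 r \<psi> m h P)"
    unfolding sum_distrib_left by (simp only: mult.assoc)
  also have "\<dots> = y$i * a$j * b$k * z$h * Rl r \<psi> i j k h P" by (simp only: low[OF r d0 d1 h])
  finally show "(\<Sum>m<2*r+2. y$i * a$j * b$k * z$h * riem_up (2*r+2) (g3 r \<psi>) m i j k P * g3 r \<psi> m h P)
     = y$i * a$j * b$k * z$h * Rl r \<psi> i j k h P" .
qed

lemma curv_closed:
  fixes y a b z :: "real vec"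
  assumes r: "r \<ge> 2" and d0: "\<forall>x. \<psi> differentiable at x" and d1: "\<forall>x. deriv \<psi> differentiable at x"
  shows "curv (2*r+2) (g3 r \<psi>) P y a b z =
    1/2 * (a$(2*r) * z$(2*r) * Hq r \<psi> P (\<lambda>i. y $ i) (\<lambda>i. b $ i) - a$(2*r) * b$(2*r) * Hq r \<psi> P (\<lambda>i. y $ i) (\<lambda>i. z $ i))
  - 1/2 * (y$(2*r) * z$(2*r) * Hq r \<psi> P (\<lambda>i. a $ i) (\<lambda>i. b $ i) - y$(2*r) * b$(2*r) * Hq r \<psi> P (\<lambda>i. a $ i) (\<lambda>i. z $ i))"
  unfolding curv_Rl[OF assms] Rl_simp Hq_def
  by (simp add: if_distrib[where f="\<lambda>x. _ * x"] sum.delta sum_distrib_left sum_if_const ac_simps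
      right_diff_distrib distrib_left sum.distrib sum_subtractf sum_negf cong: if_cong)


definition hv :: "nat \<Rightarrow> (real \<Rightarrow> real) \<Rightarrow> point \<Rightarrow> (nat \<Rightarrow> real) \<Rightarrow> nat \<Rightarrow> real" where
  "hv r \<psi> P w a = (\<Sum>i<2*r+2. w i * HF r \<psi> i a P)"

definition wv :: "nat \<Rightarrow> real vec \<Rightarrow> real vec \<Rightarrow> nat \<Rightarrow> real" where
  "wv r \<xi> y = (\<lambda>i. \<xi>$(2*r) * y$i - y$(2*r) * \<xi>$i)"

definition Jv :: "nat \<Rightarrow> (real \<Rightarrow> real) \<Rightarrow> point \<Rightarrow> real vec \<Rightarrow> real vec \<Rightarrow> real vec" where
  "Jv r \<psi> P \<xi> y = vec (2*r+2) (\<lambda>b. if b < 2*r then -1/2 * \<xi>$(2*r) * hv r \<psi> P (wv r \<xi> y) (pp r b)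
      else if b = 2*r then 0 else 1/2 * Hq r \<psi> P (wv r \<xi> y) (\<lambda>k. \<xi>$k))"

lemma hv_ge: "r \<ge> 1 \<Longrightarrow> a \<ge> 2*r \<Longrightarrow> hv r \<psi> P w a = 0"
  by (simp add: hv_def HF_ge)

lemma Hq_hv: "Hq r \<psi> P u v = (\<Sum>k<2*r+2. v k * hv r \<psi> P u k)"
  unfolding Hq_def hv_def sum_distrib_left
  by (subst sum.swap) (simp add: ac_simps)

lemma Hq_lin1: "Hq r \<psi> P (\<lambda>i. \<alpha> * u i - \<beta> * v i) t = \<alpha> * Hq r \<psi> P u t - \<beta> * Hq r \<psi> P v t"
  unfolding Hq_def by (simp add: sum_distrib_left sum_subtractf algebra_simps)

lemma gform_alt:
  assumes "v \<in> carrier_vec (2*r+2)" "z \<in> carrier_vec (2*r+2)"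
  shows "gform (2*r+2) (g3 r \<psi>) P v z = (\<Sum>j<2*r+2. z$j * (v$(pp r j) + of_bool (j = 2*r) * Fn r \<psi> P * v$(2*r)))"
proof -
  have "gform (2*r+2) (g3 r \<psi>) P v z = (\<Sum>j<2*r+2. \<Sum>i<2*r+2. v$i * z$j * g3 r \<psi> i j P)"
    unfolding gform_def by (rule sum.swap)
  also have "\<dots> = (\<Sum>j<2*r+2. z$j * (v$(pp r j) + of_bool (j = 2*r) * Fn r \<psi> P * v$(2*r)))"
  proof (rule sum.cong[OF refl])
    fix j assume "j \<in> {..<2*r+2}"
    then have j: "j < 2*r+2" by simp
    have "(\<Sum>i<2*r+2. v$i * z$j * g3 r \<psi> i j P) =
       (\<Sum>i<2*r+2. (if i = pp r j then z$j * v$i else 0) + (if i = 2*r then (if j = 2*r then z$j * Fn r \<psi> P * v$i else 0) else 0))"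
    proof (rule sum.cong[OF refl])
      fix i assume "i \<in> {..<2*r+2}"
      then have i: "i < 2*r+2" by simp
      show "v$i * z$j * g3 r \<psi> i j P = (if i = pp r j then z$j * v$i else 0) + (if i = 2*r then (if j = 2*r then z$j * Fn r \<psi> P * v$i else 0) else 0)"
        unfolding g3_alt[OF i j] pp_eq_iff[OF i j] using pp_X[OF j] pp_Y[OF j]
        by (cases "i = pp r j"; cases "i = 2*r"; simp)
    qed
    also have "\<dots> = z$j * v$(pp r j) + (if j = 2*r then z$j * Fn r \<psi> P * v$(2*r) else 0)"
    proof -
      have a: "2*r < 2*r+2" by simp
      show ?thesis by (simp only: sum.distrib sum_delta_lt[OF pp_lt[OF j]] sum_delta_lt[OF a])
    qed
    finally show "(\<Sum>i<2*r+2. v$i * z$j * g3 r \<psi> i j P) = z$j * (v$(pp r j) + of_bool (j = 2*r) * Fn r \<psi> P * v$(2*r))"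
      by (simp add: algebra_simps)
  qed
  finally show ?thesis .
qed

lemma Jv_carrier: "Jv r \<psi> P \<xi> y \<in> carrier_vec (2*r+2)" by (simp add: Jv_def)

lemma Jv_prop:
  assumes r: "r \<ge> 2" and d0: "\<forall>x. \<psi> differentiable at x" and d1: "\<forall>x. deriv \<psi> differentiable at x"
    and y: "y \<in> carrier_vec (2*r+2)" and z: "z \<in> carrier_vec (2*r+2)"
  shows "gform (2*r+2) (g3 r \<psi>) P (Jv r \<psi> P \<xi> y) z = curv (2*r+2) (g3 r \<psi>) P y \<xi> \<xi> z"
proof -
  let ?w = "wv r \<xi> y"
  let ?J = "Jv r \<psi> P \<xi> y"
  have JX: "?J $ (2*r) = 0" by (simp add: Jv_def)
  have "gform (2*r+2) (g3 r \<psi>) P ?J z = (\<Sum>j<2*r+2. z$j * (?J$(pp r j) + of_bool (j = 2*r) * Fn r \<psi> P * ?J$(2*r)))"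
    by (rule gform_alt[OF Jv_carrier z])
  also have "\<dots> = (\<Sum>j<2*r+2. (-1/2 * \<xi>$(2*r)) * (z$j * hv r \<psi> P ?w j) + (if j = 2*r then 1/2 * z$j * Hq r \<psi> P ?w (\<lambda>k. \<xi>$k) else 0))"
  proof (rule sum.cong[OF refl])
    fix j assume "j \<in> {..<2*r+2}"
    then have j: "j < 2*r+2" by simp
    consider "j < 2*r" | "j = 2*r" | "j = 2*r+1" using j by linarith
    then show "z$j * (?J$(pp r j) + of_bool (j = 2*r) * Fn r \<psi> P * ?J$(2*r)) = (-1/2 * \<xi>$(2*r)) * (z$j * hv r \<psi> P ?w j) + (if j = 2*r then 1/2 * z$j * Hq r \<psi> P ?w (\<lambda>k. \<xi>$k) else 0)"
    proof cases
      case 1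
      then have "pp r j < 2*r" "pp r (pp r j) = j" using pp_pp[OF j] by (auto simp: pp_def)
      then show ?thesis using 1 JX by (simp add: Jv_def)
    next
      case 2
      then have "pp r j = 2*r+1" by (simp add: pp_def)
      then show ?thesis using 2 JX r by (simp add: Jv_def hv_ge)
    next
      case 3
      then have "pp r j = 2*r" by (simp add: pp_def)
      then show ?thesis using 3 JX r by (simp add: hv_ge)
    qed
  qed
  also have "\<dots> = (-1/2 * \<xi>$(2*r)) * Hq r \<psi> P ?w (\<lambda>k. z$k) + 1/2 * z$(2*r) * Hq r \<psi> P ?w (\<lambda>k. \<xi>$k)"
  proof -
    have a: "2*r < 2*r+2" by simp
    show ?thesis unfolding Hq_hv[of r \<psi> P ?w "\<lambda>k. z$k"]
      by (simp only: sum.distrib sum_distrib_left[symmetric] sum_delta_lt[OF a])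
  qed
  also have "\<dots> = curv (2*r+2) (g3 r \<psi>) P y \<xi> \<xi> z"
    unfolding curv_closed[OF r d0 d1] wv_def Hq_lin1 by (simp add: algebra_simps)
  finally show ?thesis .
qed


definition Jm :: "nat \<Rightarrow> (real \<Rightarrow> real) \<Rightarrow> point \<Rightarrow> real vec \<Rightarrow> real mat" where
  "Jm r \<psi> P \<xi> = mat (2*r+2) (2*r+2) (\<lambda>(b,i).
     if b < 2*r then -1/2 * \<xi>$(2*r) * (\<xi>$(2*r) * HF r \<psi> i (pp r b) P - of_bool (i = 2*r) * hv r \<psi> P (\<lambda>k. \<xi>$k) (pp r b))
     else if b = 2*r then 0
     else 1/2 * (\<xi>$(2*r) * (\<Sum>k<2*r+2. \<xi>$k * HF r \<psi> i k P) - of_bool (i = 2*r) * Hq r \<psi> P (\<lambda>k. \<xi>$k) (\<lambda>k. \<xi>$k)))"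

lemma mult_unit: "(A :: real mat) \<in> carrier_mat n n \<Longrightarrow> i < n \<Longrightarrow> j < n \<Longrightarrow> (A *\<^sub>v unit_vec n j) $ i = A $$ (i,j)"
  by (simp add: scalar_prod_def if_distrib[where f="\<lambda>x. _ * x"] cong: if_cong)

lemma Jm_mult:
  assumes y: "y \<in> carrier_vec (2*r+2)"
  shows "Jm r \<psi> P \<xi> *\<^sub>v y = Jv r \<psi> P \<xi> y"
proof (rule eq_vecI)
  show "dim_vec (Jm r \<psi> P \<xi> *\<^sub>v y) = dim_vec (Jv r \<psi> P \<xi> y)" by (simp add: Jm_def Jv_def)
next
  fix b assume "b < dim_vec (Jv r \<psi> P \<xi> y)"
  then have b: "b < 2*r+2" by (simp add: Jv_def)
  have e: "(Jm r \<psi> P \<xi> *\<^sub>v y) $ b = (\<Sum>i<2*r+2. Jm r \<psi> P \<xi> $$ (b,i) * y$i)"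
    using b y by (simp add: Jm_def scalar_prod_def lessThan_atLeast0)
  consider "b < 2*r" | "b = 2*r" | "b = 2*r+1" using b by linarith
  then show "(Jm r \<psi> P \<xi> *\<^sub>v y) $ b = Jv r \<psi> P \<xi> y $ b"
  proof cases
    case 1
    then show ?thesis unfolding e using b
      by (simp add: Jm_def Jv_def hv_def wv_def sum_subtractf sum_distrib_left algebra_simps of_bool_def sum_negf cong: if_cong)
  next
    case 2
    then show ?thesis unfolding e using b by (simp add: Jm_def Jv_def)
  next
    case 3
    then show ?thesis unfolding e using b
      by (simp add: Jm_def Jv_def Hq_def wv_def sum_subtractf sum_distrib_left algebra_simps of_bool_def cong: if_cong)
  qed
qed

lemma gform_unit:
  assumes u: "u \<in> carrier_vec (2*r+2)" and j: "j < 2*r+2"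
  shows "gform (2*r+2) (g3 r \<psi>) P u (unit_vec (2*r+2) j) = u$(pp r j) + of_bool (j = 2*r) * Fn r \<psi> P * u$(2*r)"
  unfolding gform_alt[OF u unit_vec_carrier] using j
  by (simp add: if_distrib[where f="\<lambda>x. x * _"] cong: if_cong)

lemma vec_from_gform:
  assumes u: "u \<in> carrier_vec (2*r+2)" and v: "v \<in> carrier_vec (2*r+2)"
    and eq: "\<forall>z \<in> carrier_vec (2*r+2). gform (2*r+2) (g3 r \<psi>) P u z = gform (2*r+2) (g3 r \<psi>) P v z"
  shows "u = v"
proof -
  have e: "u$(pp r j) + of_bool (j = 2*r) * Fn r \<psi> P * u$(2*r) = v$(pp r j) + of_bool (j = 2*r) * Fn r \<psi> P * v$(2*r)"
    if j: "j < 2*r+2" for j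
    using eq unit_vec_carrier gform_unit[OF u j] gform_unit[OF v j] by metis
  have Y: "2*r+1 < 2*r+2" by simp
  have "pp r (2*r+1) = 2*r" by (simp add: pp_def)
  then have X: "u$(2*r) = v$(2*r)" using e[OF Y] by simp
  show ?thesis
  proof (rule eq_vecI)
    fix b assume "b < dim_vec v"
    then have b: "b < 2*r+2" using v by simp
    have "u$(pp r (pp r b)) = v$(pp r (pp r b))" using e[OF pp_lt[OF b]] X by simp
    then show "u$b = v$b" using pp_pp[OF b] by simp
  qed (use u v in simp)
qed

lemma jacobi_eq:
  assumes r: "r \<ge> 2" and d0: "\<forall>x. \<psi> differentiable at x" and d1: "\<forall>x. deriv \<psi> differentiable at x"
  shows "jacobi (2*r+2) (g3 r \<psi>) P \<xi> = Jm r \<psi> P \<xi>"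
  unfolding jacobi_def
proof (rule the_equality)
  have Jc: "Jm r \<psi> P \<xi> \<in> carrier_mat (2*r+2) (2*r+2)" by (simp add: Jm_def)
  show "Jm r \<psi> P \<xi> \<in> carrier_mat (2*r+2) (2*r+2) \<and>
    (\<forall>y\<in>carrier_vec (2*r+2). \<forall>z\<in>carrier_vec (2*r+2).
       gform (2*r+2) (g3 r \<psi>) P (Jm r \<psi> P \<xi> *\<^sub>v y) z = curv (2*r+2) (g3 r \<psi>) P y \<xi> \<xi> z)"
    using Jc Jm_mult Jv_prop[OF r d0 d1] by simp
next
  fix A assume A: "A \<in> carrier_mat (2*r+2) (2*r+2) \<and>
    (\<forall>y\<in>carrier_vec (2*r+2). \<forall>z\<in>carrier_vec (2*r+2).
       gform (2*r+2) (g3 r \<psi>) P (A *\<^sub>v y) z = curv (2*r+2) (g3 r \<psi>) P y \<xi> \<xi> z)"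
  have Jc: "Jm r \<psi> P \<xi> \<in> carrier_mat (2*r+2) (2*r+2)" by (simp add: Jm_def)
  have Av: "A *\<^sub>v y = Jm r \<psi> P \<xi> *\<^sub>v y" if y: "y \<in> carrier_vec (2*r+2)" for y
  proof (rule vec_from_gform)
    show "A *\<^sub>v y \<in> carrier_vec (2*r+2)" using A y mult_mat_vec_carrier by blast
    show "Jm r \<psi> P \<xi> *\<^sub>v y \<in> carrier_vec (2*r+2)" using Jc y mult_mat_vec_carrier by blast
    show "\<forall>z\<in>carrier_vec (2*r+2). gform (2*r+2) (g3 r \<psi>) P (A *\<^sub>v y) z = gform (2*r+2) (g3 r \<psi>) P (Jm r \<psi> P \<xi> *\<^sub>v y) z"
      using A y Jm_mult[OF y] Jv_prop[OF r d0 d1 y] by simp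
  qed
  show "A = Jm r \<psi> P \<xi>"
  proof (rule eq_matI)
    fix i j assume "i < dim_row (Jm r \<psi> P \<xi>)" "j < dim_col (Jm r \<psi> P \<xi>)"
    then have i: "i < 2*r+2" and j: "j < 2*r+2" using Jc by auto
    have "A $$ (i,j) = (A *\<^sub>v unit_vec (2*r+2) j) $ i" using A i j by (simp add: mult_unit)
    also have "\<dots> = (Jm r \<psi> P \<xi> *\<^sub>v unit_vec (2*r+2) j) $ i" using Av[OF unit_vec_carrier] by simp
    also have "\<dots> = Jm r \<psi> P \<xi> $$ (i,j)" using Jc i j by (simp add: mult_unit)
    finally show "A $$ (i,j) = Jm r \<psi> P \<xi> $$ (i,j)" .
  qed (use A Jc in auto)
qed


definition pos :: "nat \<Rightarrow> nat \<Rightarrow> nat" where "pos r i = (if i < r then i else 3*r - 1 - i)"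
definition idx :: "nat \<Rightarrow> nat \<Rightarrow> nat" where "idx r k = (if k < r then k else 3*r - 1 - k)"

lemma pos_lt: "i < 2*r \<Longrightarrow> pos r i < 2*r"
proof (cases "i < r")
  case False
  assume i: "i < 2*r"
  have "3*r - 1 - i < 2*r" using False i by linarith
  then show ?thesis using False unfolding pos_def by simp
qed (simp add: pos_def)
lemma idx_lt: "k < 2*r \<Longrightarrow> idx r k < 2*r"
proof (cases "k < r")
  case False
  assume i: "k < 2*r"
  have "3*r - 1 - k < 2*r" using False i by linarith
  then show ?thesis using False unfolding idx_def by simp
qed (simp add: idx_def)
lemma pos_idx: "k < 2*r \<Longrightarrow> pos r (idx r k) = k"
proof (cases "k < r")
  case False
  assume k: "k < 2*r"
  have "\<not> 3*r - 1 - k < r" using False k by linarith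
  then show ?thesis using False k unfolding pos_def idx_def by simp
qed (simp add: pos_def idx_def)
lemma idx_pos: "i < 2*r \<Longrightarrow> idx r (pos r i) = i"
proof (cases "i < r")
  case False
  assume i: "i < 2*r"
  have "\<not> 3*r - 1 - i < r" using False i by linarith
  then show ?thesis using False i unfolding pos_def idx_def by simp
qed (simp add: pos_def idx_def)

lemma HF_zero: "\<not> (a < r-1 \<and> i = r+a+1) \<Longrightarrow> \<not> (a = r-1 \<and> i = r-1) \<Longrightarrow> \<not> (r+1 \<le> a \<and> a < 2*r \<and> i = a-r-1)
   \<Longrightarrow> HF r \<psi> i a P = 0"
  unfolding HF_def by (simp only: if_not_P if_False) 

lemma HF_pp_nz:
  assumes r: "r \<ge> 2" and b: "b < 2*r" and nz: "HF r \<psi> i (pp r b) P \<noteq> 0"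
  shows "i < 2*r \<and> pos r b = Suc (pos r i)"
proof (cases "b < r")
  case True
  then have pb: "pp r b = r + b" by (simp add: pp_def)
  have "\<not> (r + b < r - 1)" "r + b \<noteq> r - 1" using r by linarith+
  then have c: "r+1 \<le> r+b \<and> r+b < 2*r \<and> i = r+b-r-1"
    using nz HF_zero[of "r+b" r i \<psi> P] \<open>\<not> (r + b < r - 1)\<close> \<open>r + b \<noteq> r - 1\<close> unfolding pb by blast
  have ir: "i < r" using True c by linarith
  have "pos r b = b" "pos r i = i" using True ir by (simp_all add: pos_def)
  then show ?thesis using True c by linarith
next
  case False
  then have pb: "pp r b = b - r" using b by (simp add: pp_def)
  have "\<not> (r+1 \<le> b - r)" using b by linarith
  then have c: "(b - r < r-1 \<and> i = r + (b-r) + 1) \<or> (b - r = r-1 \<and> i = r-1)"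
    using nz HF_zero[of "b-r" r i \<psi> P] \<open>\<not> (r+1 \<le> b - r)\<close> unfolding pb by blast
  then show ?thesis
  proof
    assume A: "b - r < r-1 \<and> i = r + (b-r) + 1"
    then have i: "i < 2*r" "\<not> i < r" using False b by linarith+
    have "pos r b = 3*r-1-b" "pos r i = 3*r-1-i" using False i(2) by (simp_all add: pos_def)
    then show ?thesis using A i False b by linarith
  next
    assume B: "b - r = r-1 \<and> i = r-1"
    then have i: "i < 2*r" "i < r" using r by linarith+
    have "pos r b = 3*r-1-b" "pos r i = i" using False i(2) by (simp_all add: pos_def)
    then show ?thesis using B i False b r by linarith
  qed
qed

lemma HF_r: "r \<ge> 2 \<Longrightarrow> HF r \<psi> r k P = 0"
  by (rule HF_zero) linarith+

lemma HF_ge_i: "r \<ge> 1 \<Longrightarrow> i \<ge> 2*r \<Longrightarrow> HF r \<psi> i k P = 0"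
  by (rule HF_zero) linarith+

definition Sq :: "nat \<Rightarrow> nat \<Rightarrow> real vec \<Rightarrow> bool" where
  "Sq r q y = (y$(2*r) = 0 \<and> (\<forall>i<2*r. pos r i < q \<longrightarrow> y$i = 0))"

lemma Jv_X: "(Jv r \<psi> P \<xi> y)$(2*r) = 0" by (simp add: Jv_def)

lemma Jv_uv_zero:
  assumes r: "r \<ge> 2" and b: "b < 2*r" and w: "\<forall>i<2*r. pos r b = Suc (pos r i) \<longrightarrow> wv r \<xi> y i = 0"
  shows "(Jv r \<psi> P \<xi> y)$b = 0"
proof -
  have "hv r \<psi> P (wv r \<xi> y) (pp r b) = 0"
    unfolding hv_def
  proof (rule sum.neutral, rule ballI)
    fix i assume "i \<in> {..<2*r+2}"
    show "wv r \<xi> y i * HF r \<psi> i (pp r b) P = 0"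
    proof (cases "HF r \<psi> i (pp r b) P = 0")
      case False
      then have "i < 2*r \<and> pos r b = Suc (pos r i)" by (rule HF_pp_nz[OF r b])
      then show ?thesis using w by simp
    qed simp
  qed
  then show ?thesis using b by (simp add: Jv_def)
qed

lemma Sq_first: assumes r: "r \<ge> 2" shows "Sq r 1 (Jv r \<psi> P \<xi> y)"
  unfolding Sq_def using Jv_X Jv_uv_zero[OF r] by auto

lemma Sq_step: assumes r: "r \<ge> 2" and S: "Sq r q y" shows "Sq r (Suc q) (Jv r \<psi> P \<xi> y)"
  unfolding Sq_def
proof (intro conjI allI impI)
  show "(Jv r \<psi> P \<xi> y)$(2*r) = 0" by (rule Jv_X)
  fix b assume b: "b < 2*r" and pb: "pos r b < Suc q"
  show "(Jv r \<psi> P \<xi> y)$b = 0"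
  proof (rule Jv_uv_zero[OF r b], intro allI impI)
    fix i assume i: "i < 2*r" and e: "pos r b = Suc (pos r i)"
    then have "y$i = 0" using S pb unfolding Sq_def by auto
    moreover have "y$(2*r) = 0" using S unfolding Sq_def by auto
    ultimately show "wv r \<xi> y i = 0" by (simp add: wv_def)
  qed
qed

lemma Jv_Y_zero:
  assumes r: "r \<ge> 2" and S: "Sq r (2*r-1) z"
  shows "(Jv r \<psi> P \<xi> z)$(2*r+1) = 0"
proof -
  have "Hq r \<psi> P (wv r \<xi> z) (\<lambda>k. \<xi>$k) = 0"
    unfolding Hq_def
  proof (rule sum.neutral, rule ballI)
    fix i assume "i \<in> {..<2*r+2}"
    then have i: "i < 2*r+2" by simp
    have h0: "wv r \<xi> z i * \<xi>$k * HF r \<psi> i k P = 0" for k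
    proof (cases "i < 2*r")
      case True
      show ?thesis
      proof (cases "i = r")
        case True
        then show ?thesis using HF_r[OF r] by simp
      next
        case False
        have "pos r i \<noteq> 2*r-1"
        proof
          assume "pos r i = 2*r-1"
          then have "i = idx r (2*r-1)" using idx_pos[OF \<open>i < 2*r\<close>] by simp
          also have "\<dots> = r" using r by (simp add: idx_def)
          finally show False using False by simp
        qed
        then have "pos r i < 2*r-1" using pos_lt[OF \<open>i < 2*r\<close>] by linarith
        then have "z$i = 0" "z$(2*r) = 0" using S True unfolding Sq_def by auto
        then show ?thesis by (simp add: wv_def)
      qed
    next
      case False
      then have "i = 2*r \<or> i = 2*r+1" using i by linarith
      then show ?thesis
      proof
        assume "i = 2*r" then show ?thesis by (simp add: wv_def)
      next
        assume "i = 2*r+1" then show ?thesis using r by (simp add: HF_ge_i)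
      qed
    qed
    show "(\<Sum>k<2*r+2. wv r \<xi> z i * \<xi>$k * HF r \<psi> i k P) = 0" by (rule sum.neutral) (use h0 in blast)
  qed
  then show ?thesis by (simp add: Jv_def)
qed

lemma pow_comm: "(A :: real mat) \<in> carrier_mat n n \<Longrightarrow> A ^\<^sub>m Suc k = A * A ^\<^sub>m k"
proof (induction k)
  case 0
  then show ?case by simp
next
  case (Suc k)
  have "A ^\<^sub>m Suc (Suc k) = A ^\<^sub>m Suc k * A" by simp
  also have "\<dots> = (A * A ^\<^sub>m k) * A" using Suc by simp
  also have "\<dots> = A * (A ^\<^sub>m k * A)" using Suc.prems by (simp add: assoc_mult_mat[of _ n n _ n _ n])
  also have "\<dots> = A * A ^\<^sub>m Suc k" by simp
  finally show ?case .
qed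

lemma Jpow_Sq:
  assumes r: "r \<ge> 2" and y: "y \<in> carrier_vec (2*r+2)" and k: "k \<ge> 1"
  shows "Sq r k (Jm r \<psi> P \<xi> ^\<^sub>m k *\<^sub>v y) \<and> Jm r \<psi> P \<xi> ^\<^sub>m k *\<^sub>v y \<in> carrier_vec (2*r+2)"
  using k
proof (induction k rule: dec_induct)
  have Jc: "Jm r \<psi> P \<xi> \<in> carrier_mat (2*r+2) (2*r+2)" by (simp add: Jm_def)
  case base
  have "Jm r \<psi> P \<xi> ^\<^sub>m 1 = Jm r \<psi> P \<xi>" using Jc by simp
  then show ?case using Jm_mult[OF y] Sq_first[OF r] Jc y by (simp add: Jv_carrier[simplified])
next
  have Jc: "Jm r \<psi> P \<xi> \<in> carrier_mat (2*r+2) (2*r+2)" by (simp add: Jm_def)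
  case (step k)
  let ?z = "Jm r \<psi> P \<xi> ^\<^sub>m k *\<^sub>v y"
  have "Jm r \<psi> P \<xi> ^\<^sub>m Suc k *\<^sub>v y = (Jm r \<psi> P \<xi> * Jm r \<psi> P \<xi> ^\<^sub>m k) *\<^sub>v y" using pow_comm[OF Jc] by simp
  also have "\<dots> = Jm r \<psi> P \<xi> *\<^sub>v ?z" using Jc y by (simp add: assoc_mult_mat_vec[of _ "2*r+2" "2*r+2" _ "2*r+2"])
  also have "\<dots> = Jv r \<psi> P \<xi> ?z" using step.IH by (simp add: Jm_mult)
  finally show ?case using Sq_step[OF r] step.IH by (simp add: Jv_carrier[simplified])
qed

lemma Jpow_zero:
  assumes r: "r \<ge> 2"
  shows "Jm r \<psi> P \<xi> ^\<^sub>m (2*r) = 0\<^sub>m (2*r+2) (2*r+2)"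
proof -
  have Jc: "Jm r \<psi> P \<xi> \<in> carrier_mat (2*r+2) (2*r+2)" by (simp add: Jm_def)
  have v0: "Jm r \<psi> P \<xi> ^\<^sub>m (2*r) *\<^sub>v y = 0\<^sub>v (2*r+2)" if y: "y \<in> carrier_vec (2*r+2)" for y
  proof -
    let ?z = "Jm r \<psi> P \<xi> ^\<^sub>m (2*r-1) *\<^sub>v y"
    have k: "2*r-1 \<ge> 1" using r by simp
    have zS: "Sq r (2*r-1) ?z" and zc: "?z \<in> carrier_vec (2*r+2)" using Jpow_Sq[OF r y k] by auto
    have e2: "2*r = Suc (2*r-1)" using r by simp
    have "Jm r \<psi> P \<xi> ^\<^sub>m (2*r) *\<^sub>v y = (Jm r \<psi> P \<xi> * Jm r \<psi> P \<xi> ^\<^sub>m (2*r-1)) *\<^sub>v y"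
      using pow_comm[OF Jc, of "2*r-1"] e2 by simp
    also have "\<dots> = Jm r \<psi> P \<xi> *\<^sub>v ?z" using Jc y by (simp add: assoc_mult_mat_vec[of _ "2*r+2" "2*r+2" _ "2*r+2"])
    also have "\<dots> = Jv r \<psi> P \<xi> ?z" using zc by (simp add: Jm_mult)
    also have "\<dots> = 0\<^sub>v (2*r+2)"
    proof (rule eq_vecI)
      have S2: "Sq r (Suc (2*r-1)) (Jv r \<psi> P \<xi> ?z)" by (rule Sq_step[OF r zS])
      fix b assume "b < dim_vec (0\<^sub>v (2*r+2) :: real vec)"
      then have b: "b < 2*r+2" by simp
      consider "b < 2*r" | "b = 2*r" | "b = 2*r+1" using b by linarith
      then show "(Jv r \<psi> P \<xi> ?z)$b = (0\<^sub>v (2*r+2))$b"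
      proof cases
        case 1
        then show ?thesis using S2 pos_lt[OF 1] e2 b unfolding Sq_def by auto
      next
        case 2
        then show ?thesis using Jv_X b by simp
      next
        case 3
        then show ?thesis using Jv_Y_zero[OF r zS] b by simp
      qed
    qed (simp add: Jv_def)
    finally show ?thesis .
  qed
  show ?thesis
  proof (rule eq_matI)
    fix i j assume "i < dim_row (0\<^sub>m (2*r+2) (2*r+2) :: real mat)" "j < dim_col (0\<^sub>m (2*r+2) (2*r+2) :: real mat)"
    then have i: "i < 2*r+2" and j: "j < 2*r+2" by auto
    have Pc: "Jm r \<psi> P \<xi> ^\<^sub>m (2*r) \<in> carrier_mat (2*r+2) (2*r+2)" using Jc by simp
    have "(Jm r \<psi> P \<xi> ^\<^sub>m (2*r)) $$ (i,j) = (Jm r \<psi> P \<xi> ^\<^sub>m (2*r) *\<^sub>v unit_vec (2*r+2) j) $ i"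
      using mult_unit[OF Pc i j] by simp
    also have "\<dots> = 0" using v0[OF unit_vec_carrier] i by simp
    finally show "(Jm r \<psi> P \<xi> ^\<^sub>m (2*r)) $$ (i,j) = (0\<^sub>m (2*r+2) (2*r+2) :: real mat) $$ (i,j)" using i j by simp
  qed (use Jc in auto)
qed


lemma Jv_e:
  assumes r: "r \<ge> 2" and a: "a < 2*r"
  shows "Jv r \<psi> P (unit_vec (2*r+2) (2*r)) (unit_vec (2*r+2) a) =
     vec (2*r+2) (\<lambda>b. if b < 2*r then -1/2 * HF r \<psi> a (pp r b) P else 0)"
proof -
  let ?x = "unit_vec (2*r+2) (2*r) :: real vec"
  let ?e = "unit_vec (2*r+2) a :: real vec"
  have wv: "wv r ?x ?e i = (if i = a then 1 else 0)" if "i < 2*r+2" for i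
    using that a by (simp add: wv_def)
  have hv: "hv r \<psi> P (wv r ?x ?e) c = HF r \<psi> a c P" for c
  proof -
    have "hv r \<psi> P (wv r ?x ?e) c = (\<Sum>i<2*r+2. if i = a then HF r \<psi> i c P else 0)"
      unfolding hv_def
    proof (rule sum.cong[OF refl])
      fix i assume "i \<in> {..<2*r+2}"
      then have i: "i < 2*r+2" by simp
      show "wv r ?x ?e i * HF r \<psi> i c P = (if i = a then HF r \<psi> i c P else 0)" using wv[OF i] by simp
    qed
    also have "\<dots> = HF r \<psi> a c P" using a by (simp add: sum_delta_lt)
    finally show ?thesis .
  qed
  have hq: "Hq r \<psi> P (wv r ?x ?e) (\<lambda>k. ?x $ k) = 0"
  proof -
    have "Hq r \<psi> P (wv r ?x ?e) (\<lambda>k. ?x $ k) = (\<Sum>k<2*r+2. (?x $ k) * hv r \<psi> P (wv r ?x ?e) k)"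
      by (rule Hq_hv)
    also have "\<dots> = (\<Sum>k<2*r+2. if k = 2*r then hv r \<psi> P (wv r ?x ?e) k else 0)"
      by (rule sum.cong) auto
    also have "\<dots> = hv r \<psi> P (wv r ?x ?e) (2*r)" by (simp add: sum_delta_lt)
    also have "\<dots> = 0" unfolding hv using r by (simp add: HF_ge)
    finally show ?thesis .
  qed
  show ?thesis
    unfolding Jv_def hv hq by (rule eq_vecI) auto
qed

lemma HF_chain_nz:
  assumes r: "r \<ge> 2" and k: "Suc k < 2*r" and pos2: "deriv (deriv \<psi>) 0 > 0"
  shows "HF r \<psi> (idx r k) (pp r (idx r (Suc k))) (\<lambda>_. 0) \<noteq> 0"
proof -
  consider "Suc k < r" | "k = r-1" | "k \<ge> r" by linarith
  then show ?thesis
  proof cases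
    case 1
    have e: "idx r k = k" "idx r (Suc k) = Suc k" "pp r (Suc k) = r + Suc k" using 1 by (simp_all add: idx_def pp_def)
    have n1: "\<not> (r + Suc k < r-1 \<and> k = r + (r + Suc k) + 1)" and n2: "\<not> (r + Suc k = r-1 \<and> k = r-1)"
      and y3: "r+1 \<le> r + Suc k \<and> r + Suc k < 2*r \<and> k = r + Suc k - r - 1" using 1 by linarith+
    show ?thesis unfolding e HF_def by (simp only: if_not_P[OF n1] if_not_P[OF n2] if_P[OF y3]; simp)
  next
    case 2
    have e: "idx r k = r-1" "idx r (Suc k) = 2*r-1" using 2 r by (simp_all add: idx_def)
    have p: "pp r (2*r-1) = r-1" using r by (simp add: pp_def)
    have n1: "\<not> (r-1 < r-1 \<and> r-1 = r + (r-1) + 1)" and y2: "r-1 = r-1 \<and> r-1 = r-1" by simp_all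
    show ?thesis unfolding e p HF_def using pos2 by (simp only: if_not_P[OF n1] if_P[OF y2]; simp)
  next
    case 3
    have f: "\<not> k < r" "\<not> Suc k < r" "\<not> 3*r-2-k < r" "3*r-2-k < 2*r" "3*r-1-Suc k = 3*r-2-k" using 3 k by linarith+
    have e: "idx r k = 3*r-1-k" "idx r (Suc k) = 3*r-2-k" using f by (simp_all add: idx_def)
    have p: "pp r (3*r-2-k) = 3*r-2-k-r" using f by (simp add: pp_def)
    have p2: "3*r-2-k-r = 2*r-2-k" by linarith
    have y1: "2*r-2-k < r-1 \<and> 3*r-1-k = r + (2*r-2-k) + 1" using 3 k by linarith
    show ?thesis unfolding e p p2 HF_def by (simp only: if_P[OF y1]; simp)
  qed
qed

lemma J0_step:
  assumes r: "r \<ge> 2" and k: "Suc k < 2*r"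
  shows "Jm r \<psi> P (unit_vec (2*r+2) (2*r)) *\<^sub>v unit_vec (2*r+2) (idx r k) =
    (-1/2 * HF r \<psi> (idx r k) (pp r (idx r (Suc k))) P) \<cdot>\<^sub>v unit_vec (2*r+2) (idx r (Suc k))"
proof -
  have a: "idx r k < 2*r" using k by (intro idx_lt) simp
  have a1: "idx r (Suc k) < 2*r" using k by (intro idx_lt)
  have "Jm r \<psi> P (unit_vec (2*r+2) (2*r)) *\<^sub>v unit_vec (2*r+2) (idx r k)
      = Jv r \<psi> P (unit_vec (2*r+2) (2*r)) (unit_vec (2*r+2) (idx r k))"
    by (rule Jm_mult) simp
  also have "\<dots> = vec (2*r+2) (\<lambda>b. if b < 2*r then -1/2 * HF r \<psi> (idx r k) (pp r b) P else 0)"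
    by (rule Jv_e[OF r a])
  also have "\<dots> = (-1/2 * HF r \<psi> (idx r k) (pp r (idx r (Suc k))) P) \<cdot>\<^sub>v unit_vec (2*r+2) (idx r (Suc k))"
  proof (rule eq_vecI)
    fix b assume "b < dim_vec ((-1/2 * HF r \<psi> (idx r k) (pp r (idx r (Suc k))) P) \<cdot>\<^sub>v unit_vec (2*r+2) (idx r (Suc k)))"
    then have b: "b < 2*r+2" by simp
    show "vec (2*r+2) (\<lambda>b. if b < 2*r then -1/2 * HF r \<psi> (idx r k) (pp r b) P else 0) $ b =
      ((-1/2 * HF r \<psi> (idx r k) (pp r (idx r (Suc k))) P) \<cdot>\<^sub>v unit_vec (2*r+2) (idx r (Suc k))) $ b"
    proof (cases "b = idx r (Suc k)")
      case True
      then show ?thesis using a1 b by simp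
    next
      case False
      have "HF r \<psi> (idx r k) (pp r b) P = 0" if bl: "b < 2*r"
      proof (rule ccontr)
        assume "HF r \<psi> (idx r k) (pp r b) P \<noteq> 0"
        then have "pos r b = Suc (pos r (idx r k))" using HF_pp_nz[OF r bl] by blast
        moreover have "k < 2*r" using k by simp
        ultimately have "pos r b = Suc k" using pos_idx by simp
        then have "b = idx r (Suc k)" using idx_pos[OF bl] by simp
        then show False using False by simp
      qed
      then have l: "vec (2*r+2) (\<lambda>b. if b < 2*r then -1/2 * HF r \<psi> (idx r k) (pp r b) P else 0) $ b = 0"
        using b by simp
      have rr: "((-1/2 * HF r \<psi> (idx r k) (pp r (idx r (Suc k))) P) \<cdot>\<^sub>v unit_vec (2*r+2) (idx r (Suc k))) $ b = 0"
        using b False a1 by simp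
      show ?thesis using l rr by simp
    qed
  qed simp
  finally show ?thesis .
qed

lemma J0_pow:
  assumes r: "r \<ge> 2" and pos2: "deriv (deriv \<psi>) 0 > 0" and k: "k < 2*r"
  shows "\<exists>c. c \<noteq> 0 \<and> Jm r \<psi> (\<lambda>_. 0) (unit_vec (2*r+2) (2*r)) ^\<^sub>m k *\<^sub>v unit_vec (2*r+2) 0
           = c \<cdot>\<^sub>v unit_vec (2*r+2) (idx r k)"
  using k
proof (induction k)
  case 0
  have "idx r 0 = 0" using r by (simp add: idx_def)
  then show ?case by (intro exI[of _ 1]) (auto simp: Jm_def)
next
  case (Suc k)
  let ?J = "Jm r \<psi> (\<lambda>_. 0) (unit_vec (2*r+2) (2*r))"
  have Jc: "?J \<in> carrier_mat (2*r+2) (2*r+2)" by (simp add: Jm_def)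
  obtain c where c: "c \<noteq> 0" and e: "?J ^\<^sub>m k *\<^sub>v unit_vec (2*r+2) 0 = c \<cdot>\<^sub>v unit_vec (2*r+2) (idx r k)"
    using Suc by auto
  let ?cf = "-1/2 * HF r \<psi> (idx r k) (pp r (idx r (Suc k))) (\<lambda>_. 0)"
  have cf: "?cf \<noteq> 0" using HF_chain_nz[OF r Suc.prems pos2] by simp
  have "?J ^\<^sub>m Suc k *\<^sub>v unit_vec (2*r+2) 0 = (?J * ?J ^\<^sub>m k) *\<^sub>v unit_vec (2*r+2) 0"
    using pow_comm[OF Jc] by simp
  also have "\<dots> = ?J *\<^sub>v (?J ^\<^sub>m k *\<^sub>v unit_vec (2*r+2) 0)"
    using Jc by (simp add: assoc_mult_mat_vec[of _ "2*r+2" "2*r+2" _ "2*r+2"])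
  also have "\<dots> = ?J *\<^sub>v (c \<cdot>\<^sub>v unit_vec (2*r+2) (idx r k))" using e by simp
  also have "\<dots> = c \<cdot>\<^sub>v (?J *\<^sub>v unit_vec (2*r+2) (idx r k))"
    by (rule mult_mat_vec[OF Jc]) simp
  also have "\<dots> = c \<cdot>\<^sub>v (?cf \<cdot>\<^sub>v unit_vec (2*r+2) (idx r (Suc k)))"
    using J0_step[OF r Suc.prems] by simp
  also have "\<dots> = (c * ?cf) \<cdot>\<^sub>v unit_vec (2*r+2) (idx r (Suc k))" by (rule smult_smult_assoc)
  finally show ?case using c cf by (intro exI[of _ "c * ?cf"]) simp
qed

lemma J0_nonzero:
  assumes r: "r \<ge> 2" and pos2: "deriv (deriv \<psi>) 0 > 0"
  shows "Jm r \<psi> (\<lambda>_. 0) (unit_vec (2*r+2) (2*r)) ^\<^sub>m (2*r-1) \<noteq> 0\<^sub>m (2*r+2) (2*r+2)"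
proof
  let ?J = "Jm r \<psi> (\<lambda>_. 0) (unit_vec (2*r+2) (2*r))"
  assume Z: "?J ^\<^sub>m (2*r-1) = 0\<^sub>m (2*r+2) (2*r+2)"
  have k: "2*r-1 < 2*r" using r by simp
  obtain c where c: "c \<noteq> 0" and e: "?J ^\<^sub>m (2*r-1) *\<^sub>v unit_vec (2*r+2) 0 = c \<cdot>\<^sub>v unit_vec (2*r+2) (idx r (2*r-1))"
    using J0_pow[OF r pos2 k] by auto
  have i: "idx r (2*r-1) < 2*r+2" using idx_lt[OF k] by simp
  have "(c \<cdot>\<^sub>v unit_vec (2*r+2) (idx r (2*r-1))) $ (idx r (2*r-1)) = c" using i by simp
  moreover have "(?J ^\<^sub>m (2*r-1) *\<^sub>v unit_vec (2*r+2) 0) $ (idx r (2*r-1)) = 0" using Z i by simp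
  ultimately show False using c e by simp
qed

theorem theorem1p6:
  fixes r :: nat and \<psi> :: "real \<Rightarrow> real"
  assumes "r \<ge> 2"
    and "\<forall>k x. ((deriv ^^ k) \<psi>) differentiable (at x)"
    and "\<forall>x. deriv (deriv \<psi>) x > 0"
  shows "(\<forall>P. \<forall>\<xi> \<in> carrier_vec (2*r+2).
            jacobi (2*r+2) (g3 r \<psi>) P \<xi> ^\<^sub>m (2*r) = 0\<^sub>m (2*r+2) (2*r+2))
       \<and> (\<exists>P0. \<exists>\<xi>0 \<in> carrier_vec (2*r+2).
            jacobi (2*r+2) (g3 r \<psi>) P0 \<xi>0 ^\<^sub>m (2*r-1) \<noteq> 0\<^sub>m (2*r+2) (2*r+2))"
proof -
  have r: "r \<ge> 2" by (rule assms(1))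
  have d0: "\<forall>x. \<psi> differentiable at x" using assms(2) by (metis funpow_0)
  have d1: "\<forall>x. deriv \<psi> differentiable at x"
  proof
    fix x show "deriv \<psi> differentiable at x" using assms(2)[rule_format, of 1 x] by simp
  qed
  have pos2: "deriv (deriv \<psi>) 0 > 0" using assms(3) by simp
  show ?thesis
  proof (intro conjI allI ballI)
    fix P and \<xi> :: "real vec"
    show "jacobi (2*r+2) (g3 r \<psi>) P \<xi> ^\<^sub>m (2*r) = 0\<^sub>m (2*r+2) (2*r+2)"
      unfolding jacobi_eq[OF r d0 d1] by (rule Jpow_zero[OF r])
  next
    show "\<exists>P0. \<exists>\<xi>0 \<in> carrier_vec (2*r+2).
            jacobi (2*r+2) (g3 r \<psi>) P0 \<xi>0 ^\<^sub>m (2*r-1) \<noteq> 0\<^sub>m (2*r+2) (2*r+2)"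
    proof (intro exI bexI)
      show "unit_vec (2*r+2) (2*r) \<in> carrier_vec (2*r+2)" by simp
      show "jacobi (2*r+2) (g3 r \<psi>) (\<lambda>_. 0) (unit_vec (2*r+2) (2*r)) ^\<^sub>m (2*r-1) \<noteq> 0\<^sub>m (2*r+2) (2*r+2)"
        unfolding jacobi_eq[OF r d0 d1] by (rule J0_nonzero[OF r pos2])
    qed
  qed
qed

end
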